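(* For every $k\ge 1$, the bi-hypergraph obtained from $\mathcal H_{2k}$ by removing the edge $\{v_{2k,1},v_{2k,2},v_{2k,3}\}$ and adding the edges $\{v_{1,j},v_{2k,j+1},v_{2k,j+2}\}$ for all $j\in[3]$ is minimal uncolorable.
   Context: A bi-hypergraph $\mathcal H=(V,E)$ consists of a finite vertex set $V$ and a set $E$ of subsets of $V$, called edges, with no edge contained in another. A mapping $f:V\to\mathbb N$ is a proper coloring of $\mathcal H$ if $1<|f(e)|<|e|$ for every $e\in E$, where $f(e)=\{f(v):v\in e\}$. $\mathcal H$ is colorable if it has a proper coloring, and uncolorable otherwise. A subhypergraph of $\mathcal H$ is a bi-hypergraph $(V',E')$ with $V'\subseteq V$, $E'\subseteq E$; $\mathcal H$ is minimal uncolorable if it is uncolorable but every proper subhypergraph of it is colorable. For $k\ge 2$, $\mathcal H_k$ is the $3$-uniform bi-hypergraph with vertex set $\{v_{i,j}: i\in[k], j\in[3]\}$ (all distinct), with the convention $v_{i,4}=v_{i,1}$, $v_{i,5}=v_{i,2}$, whose edges are the sets $\{v_{i,1},v_{i,2},v_{i,3}\}$ for all $i\in[k]$ and the sets $\{v_{q+1,j},v_{q,j},v_{q,j+t}\}$ for all $q\in[k-1]$, $j\in[3]$, $t\in\{1,2\}$. *)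

theory Defs
  imports Main
begin

definition bihypergraph :: "'a set \<times> 'a set set \<Rightarrow> bool" where
  "bihypergraph H \<longleftrightarrow> finite (fst H) \<and> (\<forall>e\<in>snd H. e \<subseteq> fst H) \<and>
     (\<forall>e\<in>snd H. \<forall>e'\<in>snd H. e \<subseteq> e' \<longrightarrow> e = e')"

definition proper_coloring :: "'a set \<times> 'a set set \<Rightarrow> ('a \<Rightarrow> nat) \<Rightarrow> bool" where
  "proper_coloring H f \<longleftrightarrow> (\<forall>e\<in>snd H. 1 < card (f ` e) \<and> card (f ` e) < card e)"

definition colorable :: "'a set \<times> 'a set set \<Rightarrow> bool" where
  "colorable H \<longleftrightarrow> (\<exists>f. proper_coloring H f)"

definition subhypergraph :: "'a set \<times> 'a set set \<Rightarrow> 'a set \<times> 'a set set \<Rightarrow> bool" where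
  "subhypergraph H' H \<longleftrightarrow> bihypergraph H' \<and> fst H' \<subseteq> fst H \<and> snd H' \<subseteq> snd H"

definition minimal_uncolorable :: "'a set \<times> 'a set set \<Rightarrow> bool" where
  "minimal_uncolorable H \<longleftrightarrow> bihypergraph H \<and> \<not> colorable H \<and>
     (\<forall>H'. subhypergraph H' H \<and> H' \<noteq> H \<longrightarrow> colorable H')"

text \<open>Vertex v_{i,j} is the pair (i, j) with j in {1,2,3}; the second index is read
  cyclically, so v_{i,4} = v_{i,1} and v_{i,5} = v_{i,2}.\<close>
definition v :: "nat \<Rightarrow> nat \<Rightarrow> nat \<times> nat" where
  "v i j = (i, (j + 2) mod 3 + 1)"

definition Hk_vertices :: "nat \<Rightarrow> (nat \<times> nat) set" where
  "Hk_vertices k = {v i j | i j. i \<in> {1..k} \<and> j \<in> {1..3}}"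

definition Hk_edges :: "nat \<Rightarrow> (nat \<times> nat) set set" where
  "Hk_edges k =
     {{v i 1, v i 2, v i 3} | i. i \<in> {1..k}} \<union>
     {{v (q+1) j, v q j, v q (j+t)} | q j t. q \<in> {1..k-1} \<and> j \<in> {1..3} \<and> t \<in> {1,2}}"

definition Hk :: "nat \<Rightarrow> (nat \<times> nat) set \<times> (nat \<times> nat) set set" where
  "Hk k = (Hk_vertices k, Hk_edges k)"

definition Hmod :: "nat \<Rightarrow> (nat \<times> nat) set \<times> (nat \<times> nat) set set" where
  "Hmod k = (Hk_vertices (2*k),
     (Hk_edges (2*k) - {{v (2*k) 1, v (2*k) 2, v (2*k) 3}}) \<union>
     {{v 1 j, v (2*k) (j+1), v (2*k) (j+2)} | j. j \<in> {1..3}})"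

end

theory Submission
  imports Defs
begin


definition good3 :: "nat \<Rightarrow> nat \<Rightarrow> nat \<Rightarrow> bool" where
  "good3 x y z \<longleftrightarrow> \<not>(x = y \<and> y = z) \<and> (x = y \<or> y = z \<or> x = z)"

lemma card_good:
  assumes "a \<noteq> b" "b \<noteq> c" "a \<noteq> c"
  shows "(1 < card (f ` {a,b,c}) \<and> card (f ` {a,b,c}) < card {a,b,c}) \<longleftrightarrow> good3 (f a) (f b) (f c)"
  using assms by (auto simp: good3_def card_insert_if)

lemma j3: "(j::nat) \<in> {1..3} \<Longrightarrow> j = 1 \<or> j = 2 \<or> j = 3" by auto

lemma edge_cases:
  assumes "e \<in> snd (Hmod k)"
  obtains (T) i where "i \<in> {1..2*k-1}" "e = {v i 1, v i 2, v i 3}"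
  | (I) q j t where "q \<in> {1..2*k-1}" "j \<in> {1..3}" "t \<in> {1,2}" "e = {v (q+1) j, v q j, v q (j+t)}"
  | (A) j where "j \<in> {1..3}" "e = {v 1 j, v (2*k) (j+1), v (2*k) (j+2)}"
proof -
  have "(\<exists>i. i \<in> {1..2*k} \<and> e = {v i 1, v i 2, v i 3} \<and> e \<noteq> {v (2*k) 1, v (2*k) 2, v (2*k) 3})
    \<or> (\<exists>q j t. q \<in> {1..2*k-1} \<and> j \<in> {1..3} \<and> t \<in> {1,2} \<and> e = {v (q+1) j, v q j, v q (j+t)})
    \<or> (\<exists>j. j \<in> {1..3} \<and> e = {v 1 j, v (2*k) (j+1), v (2*k) (j+2)})"
    using assms unfolding Hmod_def Hk_edges_def by (simp only: snd_conv Un_iff Diff_iff mem_Collect_eq singleton_iff) blast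
  then show ?thesis
  proof (elim disjE exE conjE)
    fix i assume a: "i \<in> {1..2*k}" "e = {v i 1, v i 2, v i 3}" "e \<noteq> {v (2*k) 1, v (2*k) 2, v (2*k) 3}"
    then have "i \<noteq> 2*k" by metis
    with a(1) have "i \<in> {1..2*k-1}" by auto
    then show ?thesis using T a(2) by blast
  next
    fix q j t assume "q \<in> {1..2*k-1}" "j \<in> {1..3}" "t \<in> {1,2}" "e = {v (q+1) j, v q j, v q (j+t)}"
    then show ?thesis using I by blast
  next
    fix j assume "j \<in> {1..3}" "e = {v 1 j, v (2*k) (j+1), v (2*k) (j+2)}"
    then show ?thesis using A by blast
  qed
qed

lemma proper_from:
  assumes k: "k \<ge> 1" and S: "S \<subseteq> snd (Hmod k)"
  and hT: "\<And>i. i \<in> {1..2*k-1} \<Longrightarrow> {v i 1, v i 2, v i 3} \<in> S \<Longrightarrow> good3 (f (v i 1)) (f (v i 2)) (f (v i 3))"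
  and hI: "\<And>q j t. q \<in> {1..2*k-1} \<Longrightarrow> j \<in> {1..3} \<Longrightarrow> t \<in> {1,2} \<Longrightarrow> {v (q+1) j, v q j, v q (j+t)} \<in> S
      \<Longrightarrow> good3 (f (v (q+1) j)) (f (v q j)) (f (v q (j+t)))"
  and hA: "\<And>j. j \<in> {1..3} \<Longrightarrow> {v 1 j, v (2*k) (j+1), v (2*k) (j+2)} \<in> S
      \<Longrightarrow> good3 (f (v 1 j)) (f (v (2*k) (j+1))) (f (v (2*k) (j+2)))"
  shows "\<forall>e\<in>S. 1 < card (f ` e) \<and> card (f ` e) < card e"
proof
  fix e assume eS: "e \<in> S"
  with S have "e \<in> snd (Hmod k)" by auto
  then show "1 < card (f ` e) \<and> card (f ` e) < card e"
  proof (cases rule: edge_cases)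
    case (T i)
    have d: "v i 1 \<noteq> v i 2" "v i 2 \<noteq> v i 3" "v i 1 \<noteq> v i 3" by (auto simp: v_def)
    show ?thesis using card_good[OF d, of f] hT[OF T(1)] eS T(2) by simp
  next
    case (I q j t)
    have d: "v (q+1) j \<noteq> v q j" "v q j \<noteq> v q (j+t)" "v (q+1) j \<noteq> v q (j+t)"
      using j3[OF I(2)] I(3) by (auto simp: v_def)
    show ?thesis using card_good[OF d, of f] hI[OF I(1-3)] eS I(4) by simp
  next
    case (A j)
    have d: "v 1 j \<noteq> v (2*k) (j+1)" "v (2*k) (j+1) \<noteq> v (2*k) (j+2)" "v 1 j \<noteq> v (2*k) (j+2)"
      using j3[OF A(1)] k by (auto simp: v_def)
    show ?thesis using card_good[OF d, of f] hA[OF A(1)] eS A(2) by simp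
  qed
qed



definition cA :: "nat \<Rightarrow> nat \<times> nat \<Rightarrow> nat" where
  "cA p x = (if (snd x = p) \<noteq> even (fst x) then 1 else 0)"

lemma cA_T: "p \<in> {1..3} \<Longrightarrow> good3 (cA p (v i 1)) (cA p (v i 2)) (cA p (v i 3))"
  using j3[of p] by (cases "even i") (auto simp: v_def good3_def cA_def)

lemma cA_I: "p \<in> {1..3} \<Longrightarrow> j \<in> {1..3} \<Longrightarrow> t \<in> {1,2} \<Longrightarrow>
   good3 (cA p (v (q+1) j)) (cA p (v q j)) (cA p (v q (j+t)))"
  using j3[of p] j3[of j] by (cases "even q") (auto simp: v_def good3_def cA_def)

lemma cA_A: "p \<in> {1..3} \<Longrightarrow> j \<in> {1..3} \<Longrightarrow> j \<noteq> p \<Longrightarrow>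
   good3 (cA p (v 1 j)) (cA p (v (2*k) (j+1))) (cA p (v (2*k) (j+2)))"
  using j3[of p] j3[of j] by (auto simp: v_def good3_def cA_def)
definition cI :: "nat \<Rightarrow> nat \<Rightarrow> nat \<Rightarrow> nat \<times> nat \<Rightarrow> nat" where
  "cI q j r x = (if (snd x = (if fst x \<le> q then r else j)) \<noteq> even (fst x) then 1 else 0)"

lemma cI_lo: "fst x \<le> q \<Longrightarrow> cI q j r x = cA r x" by (simp add: cI_def cA_def)
lemma cI_hi: "\<not> fst x \<le> q \<Longrightarrow> cI q j r x = cA j x" by (simp add: cI_def cA_def)

lemma cI_eq: "j \<in> {1..3} \<Longrightarrow> t \<in> {1,2} \<Longrightarrow> r = (j + 2*t + 2) mod 3 + 1 \<Longrightarrow>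
   j' \<in> {1..3} \<Longrightarrow> t' \<in> {1,2} \<Longrightarrow> \<not> (j' = j \<and> t' = t) \<Longrightarrow>
   good3 (cI q j r (v (q+1) j')) (cI q j r (v q j')) (cI q j r (v q (j'+t')))"
  apply (simp add: cI_def v_def good3_def)
  apply (cases "even q")
  using j3[of j] j3[of j'] by (auto)

lemma cI_I: "j \<in> {1..3} \<Longrightarrow> t \<in> {1,2} \<Longrightarrow> r = (j + 2*t + 2) mod 3 + 1 \<Longrightarrow>
   j' \<in> {1..3} \<Longrightarrow> t' \<in> {1,2} \<Longrightarrow> \<not> (q' = q \<and> j' = j \<and> t' = t) \<Longrightarrow>
   good3 (cI q j r (v (q'+1) j')) (cI q j r (v q' j')) (cI q j r (v q' (j'+t')))"
proof (cases q' q rule: linorder_cases)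
  case less
  assume a: "j \<in> {1..3}" "t \<in> {1,2}" "r = (j + 2*t + 2) mod 3 + 1" "j' \<in> {1..3}" "t' \<in> {1,2}"
  have r: "r \<in> {1..3}" using a(3) by auto
  show ?thesis using less cA_I[OF r a(4,5), of q'] by (simp add: cI_lo v_def)
next
  case equal
  then show "j \<in> {1..3} \<Longrightarrow> t \<in> {1,2} \<Longrightarrow> r = (j + 2*t + 2) mod 3 + 1 \<Longrightarrow>
   j' \<in> {1..3} \<Longrightarrow> t' \<in> {1,2} \<Longrightarrow> \<not> (q' = q \<and> j' = j \<and> t' = t) \<Longrightarrow> ?thesis"
    using cI_eq by auto
next
  case greater
  assume a: "j \<in> {1..3}" "t \<in> {1,2}" "r = (j + 2*t + 2) mod 3 + 1" "j' \<in> {1..3}" "t' \<in> {1,2}"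
  show ?thesis using greater cA_I[OF a(1) a(4,5), of q'] by (simp add: cI_hi v_def)
qed
lemma cI_T: "j \<in> {1..3} \<Longrightarrow> r \<in> {1..3} \<Longrightarrow> good3 (cI q j r (v i 1)) (cI q j r (v i 2)) (cI q j r (v i 3))"
  using j3[of j] j3[of r] by (cases "even i"; cases "i \<le> q") (auto simp: v_def good3_def cI_def)

lemma cI_A: "j \<in> {1..3} \<Longrightarrow> t \<in> {1,2} \<Longrightarrow> r = (j + 2*t + 2) mod 3 + 1 \<Longrightarrow> 1 \<le> q \<Longrightarrow> q < 2*k \<Longrightarrow>
   j' \<in> {1..3} \<Longrightarrow>
   good3 (cI q j r (v 1 j')) (cI q j r (v (2*k) (j'+1))) (cI q j r (v (2*k) (j'+2)))"
  using j3[of j] j3[of j'] by (auto simp: v_def good3_def cI_def)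

definition cT :: "nat \<Rightarrow> nat \<Rightarrow> nat \<times> nat \<Rightarrow> nat" where
  "cT k i x = (if fst x < i then (if (snd x = 3) \<noteq> even (fst x) then 1 else 0)
     else if fst x = i then (if even i then 1 else 0)
     else if fst x = 2*k then 2
     else (if (snd x = 3) \<noteq> even (fst x) then 2 else 3))"

lemma cT_T: "i' \<noteq> i \<Longrightarrow> i' < 2*k \<Longrightarrow> good3 (cT k i (v i' 1)) (cT k i (v i' 2)) (cT k i (v i' 3))"
  by (cases "even i'") (auto simp: v_def good3_def cT_def)

lemma cT_A: "j' \<in> {1..3} \<Longrightarrow> 1 \<le> i \<Longrightarrow> i < 2*k \<Longrightarrow>
   good3 (cT k i (v 1 j')) (cT k i (v (2*k) (j'+1))) (cT k i (v (2*k) (j'+2)))"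
  using j3[of j'] by (auto simp: v_def good3_def cT_def)

lemma cT_I: assumes "j' \<in> {1..3}" "t' \<in> {1,2}" "q' < 2*k" "i < 2*k"
  shows "good3 (cT k i (v (q'+1) j')) (cT k i (v q' j')) (cT k i (v q' (j'+t')))"
proof -
  consider "q'+1 < i" | "q'+1 = i" | "q' = i" | "i < q'" "q'+1 < 2*k" | "i < q'" "q'+1 = 2*k"
    using assms(3) by linarith
  then show ?thesis
  proof cases
    case 1 then show ?thesis using j3[OF assms(1)] assms(2)
      by (cases "even q'") (auto simp: v_def good3_def cT_def)
  next
    case 2 then show ?thesis using j3[OF assms(1)] assms(2) assms(4)
      by (cases "even q'") (auto simp: v_def good3_def cT_def)
  next
    case 3 then show ?thesis using j3[OF assms(1)] assms(2) assms(4)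
      by (cases "even q'"; cases "q'+1 = 2*k") (auto simp: v_def good3_def cT_def)
  next
    case 4 then show ?thesis using j3[OF assms(1)] assms(2)
      by (cases "even q'") (auto simp: v_def good3_def cT_def)
  next
    case 5
    then have "odd q'" by presburger
    with 5 show ?thesis using j3[OF assms(1)] assms(2)
      by (auto simp: v_def good3_def cT_def)
  qed
qed



lemma dT: "v i 1 \<noteq> v i 2" "v i 2 \<noteq> v i 3" "v i 1 \<noteq> v i 3" by (auto simp: v_def)
lemma dI: "(j::nat) \<in> {1..3} \<Longrightarrow> t \<in> {1,2} \<Longrightarrow>
  v (q+1) j \<noteq> v q j \<and> v q j \<noteq> v q (j+t) \<and> v (q+1) j \<noteq> v q (j+t)"
  using j3[of j] by (auto simp: v_def)
lemma dA: "k \<ge> 1 \<Longrightarrow> (j::nat) \<in> {1..3} \<Longrightarrow>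
  v 1 j \<noteq> v (2*k) (j+1) \<and> v (2*k) (j+1) \<noteq> v (2*k) (j+2) \<and> v 1 j \<noteq> v (2*k) (j+2)"
  using j3[of j] by (auto simp: v_def)

lemma memT: assumes "i \<in> {1..2*k-1}" shows "{v i 1, v i 2, v i 3} \<in> snd (Hmod k)"
proof -
  have "v i 1 \<notin> {v (2*k) 1, v (2*k) 2, v (2*k) 3}" using assms by (auto simp: v_def)
  then have "{v i 1, v i 2, v i 3} \<noteq> {v (2*k) 1, v (2*k) 2, v (2*k) 3}" by blast
  moreover have "i \<in> {1..2*k}" using assms by auto
  ultimately show ?thesis unfolding Hmod_def Hk_edges_def by auto
qed

lemma memI: assumes "q \<in> {1..2*k-1}" "(j::nat) \<in> {1..3}" "t \<in> {1,2}"
  shows "{v (q+1) j, v q j, v q (j+t)} \<in> snd (Hmod k)"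
proof -
  have "v q j \<notin> {v (2*k) 1, v (2*k) 2, v (2*k) 3}" using assms by (auto simp: v_def)
  then have "{v (q+1) j, v q j, v q (j+t)} \<noteq> {v (2*k) 1, v (2*k) 2, v (2*k) 3}" by blast
  then show ?thesis using assms unfolding Hmod_def Hk_edges_def
    by (simp only: snd_conv Un_iff Diff_iff mem_Collect_eq singleton_iff) blast
qed

lemma memA: assumes "(j::nat) \<in> {1..3}"
  shows "{v 1 j, v (2*k) (j+1), v (2*k) (j+2)} \<in> snd (Hmod k)"
  using assms unfolding Hmod_def Hk_edges_def by auto

lemma goods:
  assumes k: "k \<ge> 1" and P: "proper_coloring (Hmod k) f"
  shows "\<And>i. i \<in> {1..2*k-1} \<Longrightarrow> good3 (f (v i 1)) (f (v i 2)) (f (v i 3))"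
    and "\<And>q j t. q \<in> {1..2*k-1} \<Longrightarrow> (j::nat) \<in> {1..3} \<Longrightarrow> t \<in> {1,2} \<Longrightarrow>
           good3 (f (v (q+1) j)) (f (v q j)) (f (v q (j+t)))"
    and "\<And>j. j \<in> {1..3} \<Longrightarrow> good3 (f (v 1 j)) (f (v (2*k) (j+1))) (f (v (2*k) (j+2)))"
proof -
  fix i assume i: "i \<in> {1..2*k-1}"
  show "good3 (f (v i 1)) (f (v i 2)) (f (v i 3))"
    using P memT[OF i] card_good[OF dT, of f] unfolding proper_coloring_def by blast
next
  fix q j t :: nat assume a: "q \<in> {1..2*k-1}" "j \<in> {1..3}" "t \<in> {1,2}"
  have d: "v (q+1) j \<noteq> v q j" "v q j \<noteq> v q (j+t)" "v (q+1) j \<noteq> v q (j+t)" using dI[OF a(2,3)] by auto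
  show "good3 (f (v (q+1) j)) (f (v q j)) (f (v q (j+t)))"
    using P memI[OF a] card_good[OF d, of f] unfolding proper_coloring_def by blast
next
  fix j :: nat assume a: "j \<in> {1..3}"
  have d: "v 1 j \<noteq> v (2*k) (j+1)" "v (2*k) (j+1) \<noteq> v (2*k) (j+2)" "v 1 j \<noteq> v (2*k) (j+2)"
    using dA[OF k a] by auto
  show "good3 (f (v 1 j)) (f (v (2*k) (j+1))) (f (v (2*k) (j+2)))"
    using P memA[OF a, of k] card_good[OF d, of f] unfolding proper_coloring_def by blast
qed

lemma v_num: "v i 1 = (i,1)" "v i 2 = (i,2)" "v i 3 = (i,3)" "v i 4 = (i,1)" "v i 5 = (i,2)"
  "v i (Suc 0) = (i,1)" "v i (Suc (Suc 0)) = (i,2)" "v i (Suc (Suc (Suc 0))) = (i,3)"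
  by (simp_all add: v_def)

lemma e3: "{1..3::nat} = {1,2,3}" by auto
lemma e3s: "{Suc 0..3} = {1,2,3}" by auto



lemma core:
  fixes yu yw yp \<alpha> \<beta> :: nat
  assumes "\<alpha> \<noteq> \<beta>" "good3 yu \<alpha> \<alpha>" "good3 yu \<alpha> \<beta>" "good3 yw \<alpha> \<alpha>" "good3 yw \<alpha> \<beta>" "good3 yp \<beta> \<alpha>"
    "\<not> (yu = yw \<and> yw = yp)"
  shows "yu = \<beta> \<and> yw = \<beta> \<and> yp = \<alpha>"
proof -
  have "yu \<noteq> \<alpha>" "yw \<noteq> \<alpha>" using assms(2,4) unfolding good3_def by auto
  moreover have "yu = \<alpha> \<or> yu = \<beta>" "yw = \<alpha> \<or> yw = \<beta>" "yp = \<alpha> \<or> yp = \<beta>"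
    using assms(1,3,5,6) unfolding good3_def by auto
  ultimately show ?thesis using assms(7) by auto
qed

lemma core_end:
  fixes yu yw \<alpha> \<beta> :: nat
  assumes "\<alpha> \<noteq> \<beta>" "good3 yu \<alpha> \<alpha>" "good3 yu \<alpha> \<beta>" "good3 yw \<alpha> \<alpha>" "good3 yw \<alpha> \<beta>"
    "good3 \<beta> yu yw \<or> good3 \<beta> yw yu"
  shows False
proof -
  have "yu \<noteq> \<alpha>" "yw \<noteq> \<alpha>" using assms(2,4) unfolding good3_def by auto
  moreover have "yu = \<alpha> \<or> yu = \<beta>" "yw = \<alpha> \<or> yw = \<beta>"
    using assms(1,3,5) unfolding good3_def by auto
  ultimately show ?thesis using assms(6) unfolding good3_def by auto
qed

lemma step0:
  fixes ya yb yc ca cb cc \<alpha> \<beta> :: nat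
  assumes "\<alpha> \<noteq> \<beta>" "p = 1 \<or> p = 2 \<or> p = (3::nat)"
   "ca = (if p = 1 then \<beta> else \<alpha>)" "cb = (if p = 2 then \<beta> else \<alpha>)" "cc = (if p = 3 then \<beta> else \<alpha>)"
   "good3 ya ca cb" "good3 ya ca cc" "good3 yb cb cc" "good3 yb cb ca" "good3 yc cc ca" "good3 yc cc cb"
   "\<not> (ya = yb \<and> yb = yc)"
  shows "ya = (if p = 1 then \<alpha> else \<beta>) \<and> yb = (if p = 2 then \<alpha> else \<beta>) \<and> yc = (if p = 3 then \<alpha> else \<beta>)"
  using assms(2)
proof (elim disjE)
  assume p: "p = 1"
  have "yb = \<beta> \<and> yc = \<beta> \<and> ya = \<alpha>"
    by (rule core) (use assms p in auto)
  then show ?thesis using p by simp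
next
  assume p: "p = 2"
  have "yc = \<beta> \<and> ya = \<beta> \<and> yb = \<alpha>"
    by (rule core) (use assms p in auto)
  then show ?thesis using p by simp
next
  assume p: "p = 3"
  have "ya = \<beta> \<and> yb = \<beta> \<and> yc = \<alpha>"
    by (rule core) (use assms p in auto)
  then show ?thesis using p by simp
qed

lemma end0:
  fixes ya yb yc ca cb cc \<alpha> \<beta> :: nat
  assumes "\<alpha> \<noteq> \<beta>" "p = 1 \<or> p = 2 \<or> p = (3::nat)"
   "ca = (if p = 1 then \<beta> else \<alpha>)" "cb = (if p = 2 then \<beta> else \<alpha>)" "cc = (if p = 3 then \<beta> else \<alpha>)"
   "good3 ya ca cb" "good3 ya ca cc" "good3 yb cb cc" "good3 yb cb ca" "good3 yc cc ca" "good3 yc cc cb"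
   "p = 1 \<Longrightarrow> good3 \<beta> yb yc" "p = 2 \<Longrightarrow> good3 \<beta> yc ya" "p = 3 \<Longrightarrow> good3 \<beta> ya yb"
  shows False
  using assms(2)
proof (elim disjE)
  assume p: "p = 1"
  show False by (rule core_end[of \<alpha> \<beta> yb yc]) (use assms p in auto)
next
  assume p: "p = 2"
  show False by (rule core_end[of \<alpha> \<beta> yc ya]) (use assms p in auto)
next
  assume p: "p = 3"
  show False by (rule core_end[of \<alpha> \<beta> ya yb]) (use assms p in auto)
qed

lemma step:
  assumes ab: "a \<noteq> b" and p: "p \<in> {1..3}"
  and L: "\<forall>m\<in>{1..3}. f (v i m) = (if (m = p) \<noteq> even i then b else a)"
  and G: "\<And>j t. j \<in> {1..3} \<Longrightarrow> t \<in> {1,2} \<Longrightarrow> good3 (f (v (i+1) j)) (f (v i j)) (f (v i (j+t)))"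
  and T: "good3 (f (v (i+1) 1)) (f (v (i+1) 2)) (f (v (i+1) 3))"
  shows "\<forall>m\<in>{1..3}. f (v (i+1) m) = (if (m = p) \<noteq> even (i+1) then b else a)"
proof -
  define \<alpha> where "\<alpha> = (if even i then b else a)"
  define \<beta> where "\<beta> = (if even i then a else b)"
  have ab': "\<alpha> \<noteq> \<beta>" using ab by (simp add: \<alpha>_def \<beta>_def)
  have p3: "p = 1 \<or> p = 2 \<or> p = 3" using j3[OF p] .
  have c: "f (i,1) = (if p = 1 then \<beta> else \<alpha>)" "f (i,2) = (if p = 2 then \<beta> else \<alpha>)"
    "f (i,3) = (if p = 3 then \<beta> else \<alpha>)"
    using L[rule_format, of 1] L[rule_format, of 2] L[rule_format, of 3]
    by (auto simp: v_num \<alpha>_def \<beta>_def)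
  have g: "good3 (f (i+1, 1)) (f (i, 1)) (f (i, 2))" "good3 (f (i+1, 1)) (f (i, 1)) (f (i, 3))"
     "good3 (f (i+1, 2)) (f (i, 2)) (f (i, 3))" "good3 (f (i+1, 2)) (f (i, 2)) (f (i, 1))"
     "good3 (f (i+1, 3)) (f (i, 3)) (f (i, 1))" "good3 (f (i+1, 3)) (f (i, 3)) (f (i, 2))"
    using G[of 1 1] G[of 1 2] G[of 2 1] G[of 2 2] G[of 3 1] G[of 3 2] by (simp_all add: v_num)
  have t: "\<not> (f (i+1,1) = f (i+1,2) \<and> f (i+1,2) = f (i+1,3))"
    using T by (simp add: v_num good3_def)
  have r: "f (i+1,1) = (if p = 1 then \<alpha> else \<beta>) \<and> f (i+1,2) = (if p = 2 then \<alpha> else \<beta>)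
     \<and> f (i+1,3) = (if p = 3 then \<alpha> else \<beta>)"
    by (rule step0[where ca = "f (i,1)" and cb = "f (i,2)" and cc = "f (i,3)"])
      (use ab' p3 c g t in simp_all)
  show ?thesis unfolding e3 using r p3
    by (cases "even i") (auto simp: v_num \<alpha>_def \<beta>_def)
qed

lemma endl:
  assumes ab: "a \<noteq> b" and p: "p \<in> {1..3}"
  and L: "\<forall>m\<in>{1..3}. f (v i m) = (if m = p then b else a)"
  and G: "\<And>j t. j \<in> {1..3} \<Longrightarrow> t \<in> {1,2} \<Longrightarrow> good3 (f (v (i+1) j)) (f (v i j)) (f (v i (j+t)))"
  and A: "good3 b (f (v (i+1) (p+1))) (f (v (i+1) (p+2)))"
  shows False
proof -
  have p3: "p = 1 \<or> p = 2 \<or> p = 3" using j3[OF p] .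
  have c: "f (i,1) = (if p = 1 then b else a)" "f (i,2) = (if p = 2 then b else a)"
    "f (i,3) = (if p = 3 then b else a)"
    using L[rule_format, of 1] L[rule_format, of 2] L[rule_format, of 3]
    by (auto simp: v_num)
  have g: "good3 (f (i+1, 1)) (f (i, 1)) (f (i, 2))" "good3 (f (i+1, 1)) (f (i, 1)) (f (i, 3))"
     "good3 (f (i+1, 2)) (f (i, 2)) (f (i, 3))" "good3 (f (i+1, 2)) (f (i, 2)) (f (i, 1))"
     "good3 (f (i+1, 3)) (f (i, 3)) (f (i, 1))" "good3 (f (i+1, 3)) (f (i, 3)) (f (i, 2))"
    using G[of 1 1] G[of 1 2] G[of 2 1] G[of 2 2] G[of 3 1] G[of 3 2] by (simp_all add: v_num)
  have a1: "p = 1 \<Longrightarrow> good3 b (f (i+1,2)) (f (i+1,3))" using A by (simp add: v_num)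
  have a2: "p = 2 \<Longrightarrow> good3 b (f (i+1,3)) (f (i+1,1))" using A by (simp add: v_num)
  have a3: "p = 3 \<Longrightarrow> good3 b (f (i+1,1)) (f (i+1,2))" using A by (simp add: v_num)
  show False
    by (rule end0[where ca = "f (i,1)" and cb = "f (i,2)" and cc = "f (i,3)" and p = p and \<beta> = b and \<alpha> = a])
      (use ab p3 c g a1 a2 a3 in simp_all)
qed

lemma uncol: assumes k: "k \<ge> 1" shows "\<not> proper_coloring (Hmod k) f"
proof
  assume P: "proper_coloring (Hmod k) f"
  note gT = goods(1)[OF k P] and gI = goods(2)[OF k P] and gA = goods(3)[OF k P]
  have "good3 (f (v 1 1)) (f (v 1 2)) (f (v 1 3))" using gT[of 1] k by auto
  then obtain a b p where ab: "a \<noteq> b" and p: "p \<in> {1..3}"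
    and L1: "\<forall>m\<in>{1..3}. f (v 1 m) = (if (m = p) \<noteq> even (1::nat) then b else a)"
  proof -
    assume h: "\<And>a b p. a \<noteq> b \<Longrightarrow> p \<in> {1..3} \<Longrightarrow> \<forall>m\<in>{1..3}. f (v 1 m) = (if (m = p) \<noteq> even (1::nat) then b else a) \<Longrightarrow> thesis"
    assume g: "good3 (f (v 1 1)) (f (v 1 2)) (f (v 1 3))"
    consider "f (v 1 1) = f (v 1 2)" "f (v 1 3) \<noteq> f (v 1 1)" | "f (v 1 2) = f (v 1 3)" "f (v 1 1) \<noteq> f (v 1 2)"
      | "f (v 1 1) = f (v 1 3)" "f (v 1 2) \<noteq> f (v 1 1)"
      using g unfolding good3_def by metis
    then show thesis
    proof cases
      case 1 show ?thesis
        by (rule h[of "f (v 1 1)" "f (v 1 3)" 3]) (use 1 in \<open>auto simp: e3 e3s v_num\<close>)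
    next
      case 2 show ?thesis
        by (rule h[of "f (v 1 2)" "f (v 1 1)" 1]) (use 2 in \<open>auto simp: e3 e3s v_num\<close>)
    next
      case 3 show ?thesis
        by (rule h[of "f (v 1 1)" "f (v 1 2)" 2]) (use 3 in \<open>auto simp: e3 e3s v_num\<close>)
    qed
  qed
  have lay: "i \<le> 2*k-1 \<Longrightarrow> \<forall>m\<in>{1..3}. f (v i m) = (if (m = p) \<noteq> even i then b else a)" if "i \<ge> 1" for i
    using that
  proof (induction i)
    case 0 then show ?case by simp
  next
    case (Suc i)
    show ?case
    proof (cases "i = 0")
      case True then show ?thesis using L1 by simp
    next
      case False
      have IH: "\<forall>m\<in>{1..3}. f (v i m) = (if (m = p) \<noteq> even i then b else a)"
        using Suc False by auto
      have "\<forall>m\<in>{1..3}. f (v (i+1) m) = (if (m = p) \<noteq> even (i+1) then b else a)"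
        apply (rule step[OF ab p IH])
        using gI[of i] gT[of "i+1"] Suc.prems False by auto
      then show ?thesis by simp
    qed
  qed
  define i where "i = 2*k - 1"
  have oi: "odd i" "i \<ge> 1" "i+1 = 2*k" using k by (auto simp: i_def)
  have Li: "\<forall>m\<in>{1..3}. f (v i m) = (if m = p then b else a)"
    using lay[of i] oi by (simp add: i_def)
  have b1: "f (v 1 p) = b" using L1 p by auto
  show False
    apply (rule endl[OF ab p Li])
    using gI[of i] oi apply (simp add: i_def)
    using gA[OF p] b1 oi by simp
qed

lemma vert: assumes "i \<in> {1..2*k}" shows "v i j \<in> Hk_vertices (2*k)"
proof -
  have "v i j = v i ((j+2) mod 3 + 1)" by (simp add: v_def)
  moreover have "(j+2) mod 3 + 1 \<in> {1..3}" by auto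
  ultimately show ?thesis using assms unfolding Hk_vertices_def by blast
qed

lemma edge_props: assumes k: "k \<ge> 1" and e: "e \<in> snd (Hmod k)"
  shows "e \<subseteq> Hk_vertices (2*k) \<and> card e = 3 \<and> finite e"
  using e
proof (cases rule: edge_cases)
  case (T i)
  then show ?thesis using vert[of i k] dT[of i] by auto
next
  case (I q j t)
  have "q \<in> {1..2*k}" "q+1 \<in> {1..2*k}" using I(1) by auto
  then show ?thesis using I vert[of q k] vert[of "q+1" k] dI[OF I(2,3), of q] by auto
next
  case (A j)
  have "1 \<in> {1..2*k}" "2*k \<in> {1..2*k}" using k by auto
  then show ?thesis using A vert[of 1 k] vert[of "2*k" k] dA[OF k A(1)] by auto
qed

lemma bihyp: assumes k: "k \<ge> 1" shows "bihypergraph (Hmod k)"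
proof -
  have "Hk_vertices (2*k) \<subseteq> {1..2*k} \<times> {1..3}"
  proof
    fix x assume "x \<in> Hk_vertices (2*k)"
    then obtain i j where "x = v i j" "i \<in> {1..2*k}" unfolding Hk_vertices_def by blast
    moreover have "(j+2) mod 3 + 1 \<in> {1..3::nat}" by auto
    ultimately show "x \<in> {1..2*k} \<times> {1..3}" by (simp add: v_def)
  qed
  then have "finite (Hk_vertices (2*k))" by (rule finite_subset) simp
  moreover have "\<forall>e\<in>snd (Hmod k). e \<subseteq> fst (Hmod k)"
    using edge_props[OF k] by (simp add: Hmod_def)
  moreover have "\<forall>e\<in>snd (Hmod k). \<forall>e'\<in>snd (Hmod k). e \<subseteq> e' \<longrightarrow> e = e'"
  proof (intro ballI impI)
    fix e e' assume "e \<in> snd (Hmod k)" "e' \<in> snd (Hmod k)" "e \<subseteq> e'"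
    then show "e = e'" using edge_props[OF k, of e] edge_props[OF k, of e'] card_subset_eq[of e' e] by simp
  qed
  moreover have fstH: "fst (Hmod k) = Hk_vertices (2*k)" by (simp add: Hmod_def)
  ultimately show ?thesis unfolding bihypergraph_def by (simp only: fstH)
qed

lemma cover: assumes k: "k \<ge> 1" and x: "x \<in> Hk_vertices (2*k)" shows "\<exists>e\<in>snd (Hmod k). x \<in> e"
proof -
  obtain i j where ij: "x = v i j" "i \<in> {1..2*k}" "j \<in> {1..3}" using x unfolding Hk_vertices_def by blast
  show ?thesis
  proof (cases "i \<le> 2*k - 1")
    case True
    then have "i \<in> {1..2*k-1}" using ij by auto
    then have m: "{v i 1, v i 2, v i 3} \<in> snd (Hmod k)" by (rule memT)
    have "x \<in> {v i 1, v i 2, v i 3}" using j3[OF ij(3)] ij(1) by (elim disjE) simp_all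
    with m show ?thesis by (rule bexI[rotated])
  next
    case False
    then have i2: "i = 2*k" using ij by auto
    have q: "2*k-1 \<in> {1..2*k-1}" "2*k-1+1 = 2*k" using k by auto
    have "{v (2*k-1+1) j, v (2*k-1) j, v (2*k-1) (j+1)} \<in> snd (Hmod k)"
      by (rule memI[OF q(1) ij(3)]) simp
    then have "{v (2*k) j, v (2*k-1) j, v (2*k-1) (j+1)} \<in> snd (Hmod k)" by (simp only: q(2))
    then show ?thesis using ij(1) i2 by blast
  qed
qed

lemma remove: assumes k: "k \<ge> 1" and e: "e \<in> snd (Hmod k)"
  shows "\<exists>f::nat\<times>nat\<Rightarrow>nat. \<forall>e'\<in>snd (Hmod k) - {e}. 1 < card (f ` e') \<and> card (f ` e') < card e'"
  using e
proof (cases rule: edge_cases)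
  case (T i)
  have "\<forall>e'\<in>snd (Hmod k) - {e}. 1 < card (cT k i ` e') \<and> card (cT k i ` e') < card e'"
  proof (rule proper_from[OF k])
    fix i' assume "i' \<in> {1..2*k-1}" "{v i' 1, v i' 2, v i' 3} \<in> snd (Hmod k) - {e}"
    then show "good3 (cT k i (v i' 1)) (cT k i (v i' 2)) (cT k i (v i' 3))"
      using T by (intro cT_T) auto
  next
    fix q j t :: nat assume "q \<in> {1..2*k-1}" "(j::nat) \<in> {1..3}" "t \<in> {1,2}"
    then show "good3 (cT k i (v (q+1) j)) (cT k i (v q j)) (cT k i (v q (j+t)))"
      using T by (intro cT_I) auto
  next
    fix j assume "(j::nat) \<in> {1..3}"
    then show "good3 (cT k i (v 1 j)) (cT k i (v (2*k) (j+1))) (cT k i (v (2*k) (j+2)))"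
      using T by (intro cT_A) auto
  qed auto
  then show ?thesis by blast
next
  case (I q j t)
  define r where "r = (j + 2*t + 2) mod 3 + 1"
  have r3: "r \<in> {1..3}" unfolding r_def by auto
  have "\<forall>e'\<in>snd (Hmod k) - {e}. 1 < card (cI q j r ` e') \<and> card (cI q j r ` e') < card e'"
  proof (rule proper_from[OF k])
    fix i' assume "i' \<in> {1..2*k-1}"
    then show "good3 (cI q j r (v i' 1)) (cI q j r (v i' 2)) (cI q j r (v i' 3))"
      using I r3 by (intro cI_T) auto
  next
    fix q' j' t' :: nat assume a: "q' \<in> {1..2*k-1}" "(j'::nat) \<in> {1..3}" "t' \<in> {1,2}"
      "{v (q'+1) j', v q' j', v q' (j'+t')} \<in> snd (Hmod k) - {e}"
    have "\<not> (q' = q \<and> j' = j \<and> t' = t)" using a(4) I(4) by auto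
    then show "good3 (cI q j r (v (q'+1) j')) (cI q j r (v q' j')) (cI q j r (v q' (j'+t')))"
      using I a r_def by (intro cI_I) auto
  next
    fix j' assume "(j'::nat) \<in> {1..3}"
    then show "good3 (cI q j r (v 1 j')) (cI q j r (v (2*k) (j'+1))) (cI q j r (v (2*k) (j'+2)))"
      using I r_def k by (intro cI_A[of j t]) auto
  qed auto
  then show ?thesis by blast
next
  case (A p)
  have "\<forall>e'\<in>snd (Hmod k) - {e}. 1 < card (cA p ` e') \<and> card (cA p ` e') < card e'"
  proof (rule proper_from[OF k])
    fix i' assume "i' \<in> {1..2*k-1}"
    then show "good3 (cA p (v i' 1)) (cA p (v i' 2)) (cA p (v i' 3))"
      using A by (intro cA_T) auto
  next
    fix q' j' t' :: nat assume a: "q' \<in> {1..2*k-1}" "(j'::nat) \<in> {1..3}" "t' \<in> {1,2}"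
    then show "good3 (cA p (v (q'+1) j')) (cA p (v q' j')) (cA p (v q' (j'+t')))"
      using A by (intro cA_I) auto
  next
    fix j' assume a: "(j'::nat) \<in> {1..3}" "{v 1 j', v (2*k) (j'+1), v (2*k) (j'+2)} \<in> snd (Hmod k) - {e}"
    have "j' \<noteq> p" using a(2) A(2) by auto
    then show "good3 (cA p (v 1 j')) (cA p (v (2*k) (j'+1))) (cA p (v (2*k) (j'+2)))"
      using A a by (intro cA_A) auto
  qed auto
  then show ?thesis by blast
qed

theorem mainTheorem15:
  fixes k :: nat
  assumes "k \<ge> 1"
  shows "minimal_uncolorable (Hmod k)"
  unfolding minimal_uncolorable_def
proof (intro conjI allI impI)
  show "bihypergraph (Hmod k)" by (rule bihyp[OF assms])
  show "\<not> colorable (Hmod k)" unfolding colorable_def using uncol[OF assms] by blast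
  fix H' assume H': "subhypergraph H' (Hmod k) \<and> H' \<noteq> Hmod k"
  obtain V' E' where HV: "H' = (V', E')" by (cases H')
  have sub: "E' \<subseteq> snd (Hmod k)" "V' \<subseteq> Hk_vertices (2*k)" and bh: "\<forall>e\<in>E'. e \<subseteq> V'"
    using H' HV unfolding subhypergraph_def bihypergraph_def by (auto simp: Hmod_def)
  have "E' \<noteq> snd (Hmod k)"
  proof
    assume E: "E' = snd (Hmod k)"
    have "Hk_vertices (2*k) \<subseteq> V'"
    proof
      fix x assume "x \<in> Hk_vertices (2*k)"
      then obtain e where "e \<in> snd (Hmod k)" "x \<in> e" using cover[OF assms] by blast
      then show "x \<in> V'" using bh E by auto
    qed
    then have "H' = Hmod k" using sub E HV by (auto simp: Hmod_def)
    then show False using H' by simp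
  qed
  then obtain e where e: "e \<in> snd (Hmod k)" "e \<notin> E'" using sub by blast
  obtain f :: "nat\<times>nat\<Rightarrow>nat" where f: "\<forall>e'\<in>snd (Hmod k) - {e}. 1 < card (f ` e') \<and> card (f ` e') < card e'"
    using remove[OF assms e(1)] by blast
  have "proper_coloring H' f" unfolding proper_coloring_def HV using f sub(1) e(2) by auto
  then show "colorable H'" unfolding colorable_def by blast
qed



end
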